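(* Let $n \geq 2$ and $d \geq 2$ be integers, let $k$ be a positive integer, and let $\mathcal{X} \subseteq \mathbb{R}^k$. Let $\mathcal{S}_n^d$ denote the collection of all sets $\{v_1, \ldots, v_n\}$ consisting of $n$ vectors $v_i \in \mathbb{R}^d$. Suppose $g\colon \mathcal{S}_n^d \to \mathcal{X}$ is continuous, where $\mathcal{S}_n^d$ is equipped with the symmetric Chamfer distance and $\mathcal{X}$ with the Euclidean distance. Let $h\colon \mathcal{X} \to \mathbb{R}^{n \times d}$ be a function such that for every $V = \{v_1, \ldots, v_n\} \in \mathcal{S}_n^d$ there exists a permutation $\sigma$ of $\{1, \ldots, n\}$ with $$h(g(\{v_1, \ldots, v_n\})) = [v_{\sigma(1)}, v_{\sigma(2)}, \ldots, v_{\sigma(n)}],$$ i.e. the matrix whose $i$-th row is $v_{\sigma(i)}$. Then $h$ is discontinuous (with respect to the Euclidean distances on $\mathcal{X}$ and on $\mathbb{R}^{n\times d}$).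
   Context: The symmetric Chamfer distance between two sets $A, B \in \mathcal{S}_n^d$ is $d_{\mathrm{Ch}}(A,B) = \sum_{a \in A} \min_{b \in B} \|a - b\|_2^2 + \sum_{b \in B} \min_{a \in A} \|a - b\|_2^2$. Elements of $\mathcal{S}_n^d$ are unordered, while elements of $\mathbb{R}^{n \times d}$ are ordered lists of $n$ vectors in $\mathbb{R}^d$. *)

theory Defs
  imports "HOL-Analysis.Analysis"
begin

definition set_space :: "nat \<Rightarrow> (real^'d) set set" where
  "set_space n = {V. finite V \<and> card V = n}"

definition chamfer :: "(real^'d) set \<Rightarrow> (real^'d) set \<Rightarrow> real" where
  "chamfer A B =
     (\<Sum>a\<in>A. Min ((\<lambda>b. (norm (a - b))\<^sup>2) ` B)) + (\<Sum>b\<in>B. Min ((\<lambda>a. (norm (a - b))\<^sup>2) ` A))"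

definition chamfer_continuous_on :: "(real^'d) set set \<Rightarrow> ((real^'d) set \<Rightarrow> 'b::metric_space) \<Rightarrow> bool" where
  "chamfer_continuous_on S g \<longleftrightarrow>
     (\<forall>V\<in>S. \<forall>e>0. \<exists>\<delta>>0. \<forall>W\<in>S. chamfer W V < \<delta> \<longrightarrow> dist (g W) (g V) < e)"

end

theory Submission
  imports Defs
begin

lemma chamfer_le:
  fixes u w :: "'n::finite \<Rightarrow> real^'d"
  assumes "inj u" "inj w"
  shows "chamfer (range u) (range w) \<le> 2 * (\<Sum>i\<in>UNIV. (norm (u i - w i))\<^sup>2)"
proof -
  have 1: "(\<Sum>a\<in>range u. Min ((\<lambda>b. (norm (a - b))\<^sup>2) ` range w))
        = (\<Sum>i\<in>UNIV. Min ((\<lambda>b. (norm (u i - b))\<^sup>2) ` range w))"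
    using assms(1) by (simp add: sum.reindex)
  have 2: "(\<Sum>b\<in>range w. Min ((\<lambda>a. (norm (a - b))\<^sup>2) ` range u))
        = (\<Sum>i\<in>UNIV. Min ((\<lambda>a. (norm (a - w i))\<^sup>2) ` range u))"
    using assms(2) by (simp add: sum.reindex)
  have 3: "(\<Sum>i\<in>UNIV. Min ((\<lambda>b. (norm (u i - b))\<^sup>2) ` range w)) \<le> (\<Sum>i\<in>UNIV. (norm (u i - w i))\<^sup>2)"
    by (intro sum_mono Min_le) auto
  have 4: "(\<Sum>i\<in>UNIV. Min ((\<lambda>a. (norm (a - w i))\<^sup>2) ` range u)) \<le> (\<Sum>i\<in>UNIV. (norm (u i - w i))\<^sup>2)"
    by (intro sum_mono Min_le) auto
  show ?thesis unfolding chamfer_def 1 2 using 3 4 by linarith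
qed

lemma two_elems: "CARD('d::finite) \<ge> 2 \<Longrightarrow> \<exists>i j :: 'd. i \<noteq> j"
proof (rule ccontr)
  assume "CARD('d) \<ge> 2" "\<not> (\<exists>i j :: 'd. i \<noteq> j)"
  then have "card (UNIV::'d set) \<le> 1" by (simp add: card_le_Suc0_iff_eq)
  then show False using \<open>CARD('d) \<ge> 2\<close> by simp
qed

lemma not_neg_self: fixes x :: "real^'d" shows "norm x = 1 \<Longrightarrow> x \<noteq> - x"
proof
  assume "norm x = 1" "x = - x"
  from \<open>x = - x\<close> have "x + x = 0" by (metis add.right_inverse)
  then have "2 *\<^sub>R x = 0" by (simp add: scaleR_2)
  then have "x = 0" by simp
  then show False using \<open>norm x = 1\<close> by simp
qed

theorem theorem1:
  fixes X :: "(real^'k) set"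
    and g :: "(real^'d) set \<Rightarrow> real^'k"
    and h :: "real^'k \<Rightarrow> real^'d^'n"
  assumes n2: "CARD('n) \<ge> 2"
    and d2: "CARD('d) \<ge> 2"
    and g_into: "g ` set_space CARD('n) \<subseteq> X"
    and g_cont: "chamfer_continuous_on (set_space CARD('n)) g"
    and h_perm: "\<forall>v :: 'n \<Rightarrow> real^'d. inj v \<longrightarrow>
                   (\<exists>\<sigma>. \<sigma> permutes (UNIV :: 'n set) \<and>
                        (\<forall>i. h (g (range v)) $ i = v (\<sigma> i)))"
  shows "\<not> continuous_on X h"
proof
  assume hc: "continuous_on X h"
  obtain i j :: 'd where ij: "i \<noteq> j"
    using two_elems[OF d2] by blast
  obtain i0 i1 :: 'n where i01: "i0 \<noteq> i1"
    using two_elems[OF n2] by blast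
  obtain f :: "'n \<Rightarrow> nat" where finj: "inj f"
    using finite_imp_inj_to_nat_seg[of "UNIV :: 'n set"] by auto
  define e1 :: "real^'d" where "e1 = axis i 1"
  define e2 :: "real^'d" where "e2 = axis j 1"
  define a where "a t = cos t *\<^sub>R e1 + sin t *\<^sub>R e2" for t
  define v where "v t m = (if m = i0 then a t else if m = i1 then - a t else (2 + real (f m)) *\<^sub>R e1)" for t m
  have ne1: "norm e1 = 1" by (simp add: e1_def)
  have na: "norm (a t) = 1" for t
  proof -
    have "(norm (a t))\<^sup>2 = (cos t)\<^sup>2 + (sin t)\<^sup>2"
      unfolding power2_norm_eq_inner a_def e1_def e2_def
      using ij by (simp add: inner_add_left inner_add_right inner_axis_axis power2_eq_square)
    then have "(norm (a t))\<^sup>2 = 1" by simp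
    then have "norm (a t) = 1 \<or> norm (a t) = - 1" by (simp add: power2_eq_1_iff)
    then show ?thesis using norm_ge_zero[of "a t"] by linarith
  qed
  have nc: "norm ((2 + real (f m)) *\<^sub>R e1) = 2 + real (f m)" for m
    using ne1 by simp
  have inj: "inj (v t)" for t
  proof (rule injI)
    fix x y assume eq: "v t x = v t y"
    have a0: "a t \<noteq> - a t" using na[of t] by (rule not_neg_self)
    show "x = y"
    proof (cases "x = i0 \<or> x = i1")
      case True
      then show ?thesis
      proof
        assume x: "x = i0"
        show ?thesis
        proof (cases "y = i0 \<or> y = i1")
          case True then show ?thesis using eq x a0 i01 by (auto simp: v_def)
        next
          case False
          then have "norm (v t y) = 2 + real (f y)" using nc by (simp add: v_def)
          moreover have "norm (v t x) = 1" using x na by (simp add: v_def)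
          ultimately show ?thesis using eq by simp
        qed
      next
        assume x: "x = i1"
        show ?thesis
        proof (cases "y = i0 \<or> y = i1")
          case True then show ?thesis using eq x a0 i01 by (auto simp: v_def)
        next
          case False
          then have "norm (v t y) = 2 + real (f y)" using nc by (simp add: v_def)
          moreover have "norm (v t x) = 1" using x na i01 by (simp add: v_def)
          ultimately show ?thesis using eq by simp
        qed
      qed
    next
      case False
      then have nx: "norm (v t x) = 2 + real (f x)" using nc by (simp add: v_def)
      show ?thesis
      proof (cases "y = i0 \<or> y = i1")
        case True
        then have "norm (v t y) = 1" using na i01 by (auto simp: v_def)
        then show ?thesis using eq nx by simp
      next
        case False2: False
        then have "norm (v t y) = 2 + real (f y)" using nc by (simp add: v_def)
        then have "f x = f y" using nx eq by simp
        then show ?thesis using finj by (simp add: inj_eq)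
      qed
    qed
  qed
  define V where "V t = range (v t)" for t
  have Vin: "V t \<in> set_space CARD('n)" for t
    unfolding V_def set_space_def using inj[of t] by (simp add: card_image)
  have ca: "isCont a t" for t unfolding a_def by (intro continuous_intros)
  have Gc: "continuous_on {0..pi} (\<lambda>t. g (V t))"
    unfolding continuous_on_iff
  proof (intro ballI allI impI)
    fix t e :: real assume "t \<in> {0..pi}" "e > 0"
    then obtain \<delta> where d: "\<delta> > 0" "\<And>W. W \<in> set_space CARD('n) \<Longrightarrow> chamfer W (V t) < \<delta> \<Longrightarrow> dist (g W) (g (V t)) < e"
    proof -
      have "\<forall>e>0. \<exists>\<delta>>0. \<forall>W\<in>set_space CARD('n). chamfer W (V t) < \<delta> \<longrightarrow> dist (g W) (g (V t)) < e"
        using g_cont Vin[of t] unfolding chamfer_continuous_on_def by (rule bspec)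
      then have "\<exists>\<delta>>0. \<forall>W\<in>set_space CARD('n). chamfer W (V t) < \<delta> \<longrightarrow> dist (g W) (g (V t)) < e"
        using \<open>e > 0\<close> by blast
      then show ?thesis using that by blast
    qed
    obtain \<eta> where eta: "\<eta> > 0" "\<And>s. dist s t < \<eta> \<Longrightarrow> dist (a s) (a t) < sqrt (\<delta> / 4)"
    proof -
      have "sqrt (\<delta> / 4) > 0" using d(1) by simp
      then have "\<exists>\<eta>>0. \<forall>s. dist s t < \<eta> \<longrightarrow> dist (a s) (a t) < sqrt (\<delta> / 4)"
        using ca[of t] unfolding continuous_at_eps_delta by blast
      then show ?thesis using that by blast
    qed
    show "\<exists>d>0. \<forall>s\<in>{0..pi}. dist s t < d \<longrightarrow> dist (g (V s)) (g (V t)) < e"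
    proof (intro exI conjI ballI impI)
      fix s assume "dist s t < \<eta>"
      then have ds: "norm (a s - a t) < sqrt (\<delta> / 4)" using eta by (simp add: dist_norm)
      have "(\<Sum>m\<in>UNIV. (norm (v s m - v t m))\<^sup>2) = (\<Sum>m\<in>{i0,i1}. (norm (v s m - v t m))\<^sup>2)"
        by (rule sum.mono_neutral_right) (auto simp: v_def)
      also have "\<dots> = 2 * (norm (a s - a t))\<^sup>2"
        using i01 by (simp add: v_def norm_minus_commute[of "a s"] )
      finally have "chamfer (V s) (V t) \<le> 4 * (norm (a s - a t))\<^sup>2"
        using chamfer_le[OF inj inj, of s t] unfolding V_def by simp
      also have "\<dots> < \<delta>"
      proof -
        have "(norm (a s - a t))\<^sup>2 < (sqrt (\<delta> / 4))\<^sup>2"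
          using ds by (intro power_strict_mono) auto
        then show ?thesis using d(1) by simp
      qed
      finally show "dist (g (V s)) (g (V t)) < e" using d(2)[OF Vin] by blast
    qed (use eta in auto)
  qed
  define F where "F t = h (g (V t))" for t
  have Fc: "continuous_on {0..pi} F"
    unfolding F_def by (rule continuous_on_compose2[OF hc Gc]) (use g_into Vin in auto)
  have perm: "\<exists>\<sigma>. \<sigma> permutes (UNIV :: 'n set) \<and> (\<forall>m. F t $ m = v t (\<sigma> m))" for t
    using h_perm inj[of t] unfolding F_def V_def by blast
  obtain \<sigma>0 where s0: "\<sigma>0 permutes (UNIV :: 'n set)" "\<And>m. F 0 $ m = v 0 (\<sigma>0 m)"
    using perm[of 0] by blast
  define k where "k = inv \<sigma>0 i0"
  have F0k: "F 0 $ k = e1"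
    using s0 permutes_inverses(1)[OF s0(1)] by (simp add: k_def v_def a_def)
  have "V pi = V 0"
    unfolding V_def
  proof (intro equalityI subsetI)
    fix x assume "x \<in> range (v pi)"
    then obtain m where x: "x = v pi m" by blast
    show "x \<in> range (v 0)"
    proof -
      have "x = v 0 (if m = i0 then i1 else if m = i1 then i0 else m)"
        using x i01 by (auto simp: v_def a_def)
      then show ?thesis by blast
    qed
  next
    fix x assume "x \<in> range (v 0)"
    then obtain m where x: "x = v 0 m" by blast
    show "x \<in> range (v pi)"
    proof -
      have "x = v pi (if m = i0 then i1 else if m = i1 then i0 else m)"
        using x i01 by (auto simp: v_def a_def)
      then show ?thesis by blast
    qed
  qed
  then have Fpi: "F pi $ k = e1" using F0k unfolding F_def by simp
  define \<phi> where "\<phi> t = norm (F t $ k - a t)" for t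
  have \<phi>c: "continuous_on {0..pi} \<phi>"
    unfolding \<phi>_def a_def by (intro continuous_intros Fc)
  have "\<phi> 0 = 0" using F0k by (simp add: \<phi>_def a_def)
  moreover have "\<phi> pi = 2"
  proof -
    have "F pi $ k - a pi = 2 *\<^sub>R e1" using Fpi by (simp add: a_def scaleR_2)
    then show ?thesis using ne1 by (simp add: \<phi>_def)
  qed
  ultimately obtain t where t: "\<phi> t = 1/2"
    using IVT'[of \<phi> 0 "1/2" pi] \<phi>c by auto
  obtain \<sigma> where "\<forall>m. F t $ m = v t (\<sigma> m)" using perm[of t] by blast
  then have \<phi>t: "\<phi> t = norm (v t (\<sigma> k) - a t)" by (simp add: \<phi>_def)
  show False
  proof (cases "\<sigma> k = i0 \<or> \<sigma> k = i1")
    case True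
    then have "\<phi> t = 0 \<or> \<phi> t = norm (2 *\<^sub>R a t)"
      using \<phi>t i01 by (auto simp: v_def norm_minus_commute scaleR_2)
    then show False using t na by auto
  next
    case False
    then have "norm (v t (\<sigma> k)) = 2 + real (f (\<sigma> k))" using nc by (simp add: v_def)
    moreover have "norm (v t (\<sigma> k)) - norm (a t) \<le> \<phi> t"
      using \<phi>t norm_triangle_ineq2 by metis
    ultimately show False using t na by simp
  qed
qed

end
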